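(* Let $n\ge2$. For any $A,B\in\mathbb{R}^{n\times n}$ there exists a nonzero polynomial $P\in\mathbb{Z}\langle X,Y\rangle$ in two non-commuting variables with $P(A,B)=\mathbf{0}$; i.e. no two real $n\times n$ matrices are algebraically independent over $\mathbb{Z}$.
   Context: $\mathbb{Z}\langle X,Y\rangle$ denotes the ring of polynomials in non-commuting variables $X,Y$ with integer coefficients (finite $\mathbb{Z}$-linear combinations of words in $X,Y$); nonzero means nonzero as a formal polynomial. $P(A,B)$ denotes evaluation by substituting matrices (constant term times $I_n$). $A,B$ are algebraically dependent if some nonzero such $P$ has $P(A,B)=\mathbf{0}$, and algebraically independent otherwise. *)

theory Defs
  imports "HOL-Analysis.Analysis"
begin

text \<open>Noncommutative polynomials in Z<X,Y>: words over the alphabet {X,Y} are lists of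
letters; a polynomial is a coefficient function from words to int with finite support.\<close>

datatype letter = LX | LY

type_synonym ncpoly = "letter list \<Rightarrow> int"

definition ncpoly_valid :: "ncpoly \<Rightarrow> bool" where
  "ncpoly_valid P \<longleftrightarrow> finite {w. P w \<noteq> 0}"

definition ncpoly_nonzero :: "ncpoly \<Rightarrow> bool" where
  "ncpoly_nonzero P \<longleftrightarrow> (\<exists>w. P w \<noteq> 0)"

fun word_eval :: "letter list \<Rightarrow> real^'n^'n \<Rightarrow> real^'n^'n \<Rightarrow> real^'n^'n" where
  "word_eval [] A B = mat 1"
| "word_eval (LX # w) A B = A ** word_eval w A B"
| "word_eval (LY # w) A B = B ** word_eval w A B"

definition ncpoly_eval :: "ncpoly \<Rightarrow> real^'n^'n \<Rightarrow> real^'n^'n \<Rightarrow> real^'n^'n" where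
  "ncpoly_eval P A B = (\<Sum>w\<in>{w. P w \<noteq> 0}. real_of_int (P w) *\<^sub>R word_eval w A B)"

definition alg_dependent :: "real^'n^'n \<Rightarrow> real^'n^'n \<Rightarrow> bool" where
  "alg_dependent A B \<longleftrightarrow>
     (\<exists>P. ncpoly_valid P \<and> ncpoly_nonzero P \<and> ncpoly_eval P A B = 0)"

end

theory Submission
  imports Defs "HOL-Combinatorics.Permutations"
begin

fun oprod :: "(nat \<Rightarrow> real^'n^'n) \<Rightarrow> nat \<Rightarrow> real^'n^'n" where
  "oprod g 0 = mat 1"
| "oprod g (Suc k) = oprod g k ** g k"

definition Sm :: "nat \<Rightarrow> (nat \<Rightarrow> real^'n^'n) \<Rightarrow> real^'n^'n" where
  "Sm m f = (\<Sum>p\<in>{p. p permutes {..<m}}. of_int (sign p) *\<^sub>R oprod (f \<circ> p) m)"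

lemma matrix_add_rdistrib': "((A::real^'n^'n) + B) ** C = A ** C + B ** C"
  by (vector matrix_matrix_mult_def sum.distrib[symmetric] field_simps)

lemma lin_rmul:
  assumes "linear (f :: 'a::real_vector \<Rightarrow> real^'n^'n)"
  shows "linear (\<lambda>x. f x ** (C::real^'n^'n))"
proof (rule linearI)
  fix x y show "f (x + y) ** C = f x ** C + f y ** C"
    by (simp add: linear_add[OF assms] matrix_add_rdistrib')
next
  fix r x show "f (r *\<^sub>R x) ** C = r *\<^sub>R (f x ** C)"
    by (simp add: linear_scale[OF assms] scalar_matrix_assoc)
qed

lemma lin_lmul:
  assumes "linear (f :: 'a::real_vector \<Rightarrow> real^'n^'n)"
  shows "linear (\<lambda>x. (C::real^'n^'n) ** f x)"
proof (rule linearI)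
  fix x y show "C ** f (x + y) = C ** f x + C ** f y"
    by (simp add: linear_add[OF assms] matrix_add_ldistrib)
next
  fix r x show "C ** f (r *\<^sub>R x) = r *\<^sub>R (C ** f x)"
    by (simp add: linear_scale[OF assms] matrix_scalar_ac scalar_matrix_assoc)
qed

lemma oprod_cong: "(\<forall>j<m. g j = h j) \<Longrightarrow> oprod g m = oprod h m"
  by (induction m) auto

lemma oprod_lin:
  fixes g :: "real^'n^'n \<Rightarrow> nat \<Rightarrow> real^'n^'n"
  assumes lq: "linear (\<lambda>x. g x q)" and cst: "\<forall>j. j \<noteq> q \<longrightarrow> (\<forall>x y. g x j = g y j)"
  shows "(m \<le> q \<longrightarrow> (\<forall>x y. oprod (g x) m = oprod (g y) m)) \<and> (q < m \<longrightarrow> linear (\<lambda>x. oprod (g x) m))"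
proof (induction m)
  case 0 then show ?case by simp
next
  case (Suc m)
  show ?case
  proof (intro conjI impI)
    assume "Suc m \<le> q"
    then show "\<forall>x y. oprod (g x) (Suc m) = oprod (g y) (Suc m)"
      using Suc cst by (metis Suc_leD oprod.simps(2) not_less_eq_eq order_refl le_antisym)
  next
    assume "q < Suc m"
    show "linear (\<lambda>x. oprod (g x) (Suc m))"
    proof (cases "m = q")
      case True
      then have c: "\<And>x. oprod (g x) m = oprod (g 0) m" using Suc by auto
      have l: "linear (\<lambda>x. oprod (g 0) m ** g x m)" using lin_lmul[OF lq, of "oprod (g 0) m"] True by simp
      have e: "(\<lambda>x. oprod (g x) (Suc m)) = (\<lambda>x. oprod (g 0) m ** g x m)"
      proof
        fix x show "oprod (g x) (Suc m) = oprod (g 0) m ** g x m" using c[of x] by simp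
      qed
      show ?thesis unfolding e by (rule l)
    next
      case False
      then have "q < m" using \<open>q < Suc m\<close> by auto
      then have l: "linear (\<lambda>x. oprod (g x) m)" using Suc by auto
      have c: "\<And>x. g x m = g 0 m" using cst False by metis
      have e: "(\<lambda>x. oprod (g x) (Suc m)) = (\<lambda>x. oprod (g x) m ** g 0 m)"
      proof
        fix x show "oprod (g x) (Suc m) = oprod (g x) m ** g 0 m" using c[of x] by simp
      qed
      show ?thesis unfolding e by (rule lin_rmul[OF l])
    qed
  qed
qed

lemma Sm_lin:
  assumes "k < m"
  shows "linear (\<lambda>x. Sm m (f(k:=x)))"
  unfolding Sm_def
proof (rule linear_compose_sum, rule ballI)
  fix p assume "p \<in> {p. p permutes {..<m}}"
  then have p: "p permutes {..<m}" by simp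
  define q where "q = inv p k"
  have pq: "p q = k" unfolding q_def using p by (simp add: permutes_inverses(1))
  have qm: "q < m" unfolding q_def using p assms
    by (metis lessThan_iff permutes_inv permutes_in_image)
  have "linear (\<lambda>x. oprod ((f(k:=x)) \<circ> p) m)"
  proof -
    have "linear (\<lambda>x. ((f(k:=x)) \<circ> p) q)" using pq by (simp add: linear_id[unfolded id_def])
    moreover have "\<forall>j. j \<noteq> q \<longrightarrow> (\<forall>x y. ((f(k:=x)) \<circ> p) j = ((f(k:=y)) \<circ> p) j)"
      using pq p by (metis comp_apply fun_upd_other permutes_inj injD)
    ultimately show ?thesis using oprod_lin[of "\<lambda>x. (f(k:=x)) \<circ> p" q m] qm by blast
  qed
  then show "linear (\<lambda>x. real_of_int (sign p) *\<^sub>R oprod ((f(k := x)) \<circ> p) m)"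
    by (rule linear_compose_scale_right)
qed

lemma Sm_eq:
  assumes "i < m" "j < m" "i \<noteq> j" "f i = f j"
  shows "Sm m f = 0"
proof -
  define t where "t = Transposition.transpose i j"
  define P where "P = {p. p permutes {..<m}}"
  define h where "h = (\<lambda>p. real_of_int (sign p) *\<^sub>R oprod (f \<circ> p) m)"
  have tP: "t permutes {..<m}" unfolding t_def using assms by (simp add: permutes_swap_id)
  have ft: "f \<circ> t = f" unfolding t_def using assms
    by (simp add: fun_eq_iff Transposition.transpose_def)
  have "sum h P = sum (\<lambda>p. h (t \<circ> p)) P"
    apply (rule sum.reindex_bij_witness[of _ "\<lambda>p. t \<circ> p" "\<lambda>p. t \<circ> p"])
    using tP unfolding P_def t_def
    by (auto simp: comp_assoc[symmetric] intro: permutes_compose)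
  also have "\<dots> = sum (\<lambda>p. - h p) P"
  proof (rule sum.cong[OF refl])
    fix p assume "p \<in> P"
    then have pp: "permutation p" unfolding P_def using permutation_permutes by blast
    have tp: "permutation t" using tP permutation_permutes by blast
    have "sign (t \<circ> p) = - sign p" using sign_compose[OF tp pp] assms
      by (simp add: t_def sign_swap_id)
    moreover have "f \<circ> (t \<circ> p) = f \<circ> p" by (simp add: comp_assoc[symmetric] ft)
    ultimately show "h (t \<circ> p) = - h p" unfolding h_def by simp
  qed
  also have "\<dots> = - sum h P" by (simp add: sum_negf)
  finally have "sum h P = - sum h P" .
  then have "(2::real) *\<^sub>R sum h P = 0" by (simp add: scaleR_2 eq_neg_iff_add_eq_0)
  then have "sum h P = 0" by simp
  then show ?thesis unfolding Sm_def P_def h_def by simp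
qed


definition blk :: "nat \<Rightarrow> letter list" where
  "blk j = LX # replicate j LY"

definition good :: "letter list \<Rightarrow> bool" where
  "good u \<longleftrightarrow> u = [] \<or> hd u = LX"

lemma good_concat: "good (concat (map blk xs))"
  by (cases xs) (auto simp: good_def blk_def)

lemma rep_dec: "replicate a LY @ u = replicate b LY @ v \<Longrightarrow> good u \<Longrightarrow> good v \<Longrightarrow> a = b \<and> u = v"
proof (induction a arbitrary: b)
  case 0 then show ?case by (cases b) (auto simp: good_def)
next
  case (Suc a) then show ?case by (cases b) (auto simp: good_def)
qed

lemma concat_blk_inj: "concat (map blk xs) = concat (map blk ys) \<Longrightarrow> xs = ys"
proof (induction xs arbitrary: ys)
  case Nil then show ?case by (cases ys) (auto simp: blk_def)
next
  case (Cons x xs)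
  show ?case
  proof (cases ys)
    case Nil then show ?thesis using Cons by (auto simp: blk_def)
  next
    case (Cons y ys')
    have "replicate x LY @ concat (map blk xs) = replicate y LY @ concat (map blk ys')"
      using Cons.prems Cons unfolding blk_def by simp
    then have "x = y \<and> concat (map blk xs) = concat (map blk ys')"
      using rep_dec good_concat by blast
    then show ?thesis using Cons Cons.IH by auto
  qed
qed

lemma word_eval_append: "word_eval (u @ v) A B = word_eval u A B ** word_eval v A B"
proof (induction u)
  case Nil then show ?case by simp
next
  case (Cons l u) then show ?case by (cases l) (simp_all add: matrix_mul_assoc)
qed

lemma word_eval_W:
  "word_eval (concat (map (\<lambda>j. blk (p j)) [0..<m])) A B = oprod ((\<lambda>j. word_eval (blk j) A B) \<circ> p) m"
  by (induction m) (simp_all add: word_eval_append)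

lemma Sm_zero:
  fixes f :: "nat \<Rightarrow> real^'n^'n"
  assumes m: "m = DIM(real^'n^'n) + 1"
  shows "Sm m f = 0"
proof (cases "inj_on f {..<m}")
  case False
  then obtain i j where "i < m" "j < m" "i \<noteq> j" "f i = f j" unfolding inj_on_def by auto
  then show ?thesis using Sm_eq by blast
next
  case True
  define F where "F = f ` {..<m}"
  have cF: "card F = m" unfolding F_def using True by (simp add: card_image)
  have fF: "finite F" unfolding F_def by simp
  have gt: "card F > DIM(real^'n^'n)" using cF m by linarith
  have "dependent F" using dependent_biggerset gt by blast
  then obtain a where aF: "a \<in> F" and as: "a \<in> span (F - {a})" unfolding dependent_def by blast
  obtain k where km: "k < m" and ak: "a = f k" using aF unfolding F_def by auto
  obtain u where au: "a = (\<Sum>v\<in>F - {a}. u v *\<^sub>R v)"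
    using as real_vector.span_finite[of "F - {a}"] fF by auto
  have lin: "linear (\<lambda>x. Sm m (f(k:=x)))" using Sm_lin[OF km] .
  have "Sm m f = Sm m (f(k := a))" using ak by simp
  also have "\<dots> = Sm m (f(k := (\<Sum>v\<in>F - {a}. u v *\<^sub>R v)))"
    by (rule arg_cong[where f="\<lambda>x. Sm m (f(k:=x))"]) (rule au)
  also have "\<dots> = (\<Sum>v\<in>F - {a}. u v *\<^sub>R Sm m (f(k := v)))"
    by (simp add: linear_sum[OF lin] linear_scale[OF lin])
  also have "\<dots> = 0"
  proof (rule sum.neutral, rule ballI)
    fix v assume "v \<in> F - {a}"
    then obtain j where "j < m" "v = f j" "j \<noteq> k" unfolding F_def using ak by auto
    then have "Sm m (f(k := v)) = 0"
      using Sm_eq[of k m j "f(k:=v)"] km by auto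
    then show "u v *\<^sub>R Sm m (f(k := v)) = 0" by simp
  qed
  finally show ?thesis .
qed

theorem mainTheorem13:
  fixes A B :: "real^'n^'n"
  assumes "CARD('n) \<ge> 2"
  shows "\<exists>P. ncpoly_valid P \<and> ncpoly_nonzero P \<and> ncpoly_eval P A B = 0"
proof -
  define m where "m = DIM(real^'n^'n) + 1"
  define Perms where "Perms = {p. p permutes {..<m}}"
  define W where "W = (\<lambda>p::nat\<Rightarrow>nat. concat (map (\<lambda>j. blk (p j)) [0..<m]))"
  define f where "f = (\<lambda>j. word_eval (blk j) A B)"
  define P :: ncpoly where "P = (\<lambda>w. \<Sum>p\<in>Perms. if W p = w then sign p else 0)"
  have finP: "finite Perms" unfolding Perms_def by (simp add: finite_permutations)
  have supp: "{w. P w \<noteq> 0} \<subseteq> W ` Perms"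
  proof
    fix w assume "w \<in> {w. P w \<noteq> 0}"
    then have "(\<Sum>p\<in>Perms. if W p = w then sign p else 0) \<noteq> 0" unfolding P_def by simp
    then obtain p where "p \<in> Perms" "(if W p = w then sign p else 0) \<noteq> 0"
      using sum.not_neutral_contains_not_neutral by blast
    then have "p \<in> Perms" "W p = w" by (auto split: if_splits)
    then show "w \<in> W ` Perms" by auto
  qed
  have valid: "ncpoly_valid P" unfolding ncpoly_valid_def
    using finite_subset[OF supp] finP by auto
  have Wid: "p = id" if "p \<in> Perms" "W p = W id" for p
  proof -
    have pp: "p permutes {..<m}" using that unfolding Perms_def by simp
    have "concat (map blk (map p [0..<m])) = concat (map blk (map id [0..<m]))"
      using that(2) unfolding W_def by (simp add: comp_def)
    then have "map p [0..<m] = map id [0..<m]" by (rule concat_blk_inj)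
    then have mp: "map p [0..<m] = [0..<m]" by simp
    have pj: "\<forall>j<m. p j = j"
    proof (intro allI impI)
      fix j assume "j < m"
      then have "map p [0..<m] ! j = [0..<m] ! j" using mp by simp
      then show "p j = j" using \<open>j < m\<close> by simp
    qed
    show "p = id"
    proof
      fix j show "p j = id j" using pj permutes_not_in[OF pp, of j] by (cases "j < m") auto
    qed
  qed
  have "P (W id) = (\<Sum>p\<in>Perms. if p = id then sign p else 0)"
    unfolding P_def by (rule sum.cong[OF refl]) (use Wid in auto)
  also have "\<dots> = 1" using finP by (simp add: Perms_def permutes_id)
  finally have "P (W id) \<noteq> 0" by simp
  then have nz: "ncpoly_nonzero P" unfolding ncpoly_nonzero_def by blast
  have "ncpoly_eval P A B = (\<Sum>w\<in>W ` Perms. real_of_int (P w) *\<^sub>R word_eval w A B)"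
    unfolding ncpoly_eval_def
    by (rule sum.mono_neutral_left[OF finite_imageI[OF finP] supp]) simp
  also have "\<dots> = (\<Sum>w\<in>W ` Perms. \<Sum>p\<in>Perms. (if W p = w then real_of_int (sign p) *\<^sub>R word_eval w A B else 0))"
    unfolding P_def of_int_sum scaleR_sum_left by (intro sum.cong refl) simp
  also have "\<dots> = (\<Sum>p\<in>Perms. \<Sum>w\<in>W ` Perms. (if W p = w then real_of_int (sign p) *\<^sub>R word_eval w A B else 0))"
    by (rule sum.swap)
  also have "\<dots> = (\<Sum>p\<in>Perms. real_of_int (sign p) *\<^sub>R word_eval (W p) A B)"
  proof (rule sum.cong[OF refl])
    fix p assume pP: "p \<in> Perms"
    show "(\<Sum>w\<in>W ` Perms. (if W p = w then real_of_int (sign p) *\<^sub>R word_eval w A B else 0))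
          = real_of_int (sign p) *\<^sub>R word_eval (W p) A B"
      by (simp only: sum.delta'[OF finite_imageI[OF finP]] imageI[OF pP] if_True)
  qed
  also have "\<dots> = Sm m f"
    unfolding Sm_def Perms_def W_def f_def word_eval_W by (rule refl)
  also have "\<dots> = 0" by (rule Sm_zero[OF m_def])
  finally show ?thesis using valid nz by blast
qed

end
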